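(* Let $\tau$ be a $T_1$-topology on $\mathcal{C}(p,q)$ such that $(\mathcal{C}(p,q),\tau)$ is a semitopological semigroup and the maps $\mathcal{C}(p,q)\to E(\mathcal{C}(p,q))$, $x\mapsto xx^{-1}$ and $x\mapsto x^{-1}x$, are continuous. If there exists an idempotent $q^ip^i\in\mathcal{C}(p,q)$ such that the subspace $E(\mathcal{C}(p,q))$ is semiregular at $q^ip^i$, then $\tau$ is discrete.
   Context: The bicyclic monoid $\mathcal{C}(p,q)$ is the monoid generated by $p,q$ subject only to $pq=1$; elements are uniquely $q^ip^j$, $i,j\in\omega$, with multiplication $q^kp^l\cdot q^mp^n = q^{k-l+m}p^n$ if $l<m$, $=q^kp^n$ if $l=m$, $=q^kp^{l-m+n}$ if $l>m$, and inversion $(q^ip^j)^{-1}=q^jp^i$. $E(\mathcal{C}(p,q))=\{q^ip^i:i\in\omega\}$ with the subspace topology. Semitopological semigroup: multiplication separately continuous. A subspace $Y$ is semiregular at $x\in Y$ if $x$ has a neighbourhood base in $Y$ consisting of sets $U$ with $U=\mathrm{int}_Y(\mathrm{cl}_Y(U))$. *)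

theory Defs
  imports "HOL-Analysis.Analysis"
begin

text \<open>The bicyclic monoid C(p,q): the element q^i p^j is represented by the pair (i,j).\<close>

definition bc_mult :: "nat \<times> nat \<Rightarrow> nat \<times> nat \<Rightarrow> nat \<times> nat" where
  "bc_mult x y = (case x of (k,l) \<Rightarrow> case y of (m,n) \<Rightarrow>
      if l < m then (k + (m - l), n)
      else if l = m then (k, n)
      else (k, (l - m) + n))"

definition bc_inv :: "nat \<times> nat \<Rightarrow> nat \<times> nat" where
  "bc_inv x = (snd x, fst x)"

definition bc_E :: "(nat \<times> nat) set" where
  "bc_E = {(i, i) | i. True}"

definition bc_semitopological :: "(nat \<times> nat) topology \<Rightarrow> bool" where
  "bc_semitopological T \<longleftrightarrow> topspace T = UNIV \<and>
     (\<forall>a. continuous_map T T (\<lambda>x. bc_mult a x) \<and> continuous_map T T (\<lambda>x. bc_mult x a))"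

definition semiregular_at :: "'a topology \<Rightarrow> 'a set \<Rightarrow> 'a \<Rightarrow> bool" where
  "semiregular_at X Y x \<longleftrightarrow> x \<in> Y \<and>
     (\<forall>W. openin (subtopology X Y) W \<and> x \<in> W \<longrightarrow>
        (\<exists>U. x \<in> U \<and> U \<subseteq> W \<and>
             U = (subtopology X Y) interior_of ((subtopology X Y) closure_of U)))"

end

theory Submission
  imports Defs
begin

lemma bcE_iff: "x \<in> bc_E \<longleftrightarrow> (\<exists>k. x = (k,k))"
  by (auto simp: bc_E_def)

lemma mult_EE: "bc_mult (n,n) (k,k) = (max n k, max n k)"
  by (auto simp: bc_mult_def)

lemma mult_shift: "bc_mult (bc_mult (a,0) (k,k)) (0,a) = (k+a, k+a)"
  by (auto simp: bc_mult_def)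

lemma mult_down: "bc_mult (0,n) (bc_mult (k,k) (n,0)) = (k-n, k-n)"
  by (auto simp: bc_mult_def)

lemma mult_inv1: "bc_mult (i,j) (bc_inv (i,j)) = (i,i)"
  by (auto simp: bc_mult_def bc_inv_def)

lemma mult_inv2: "bc_mult (bc_inv (i,j)) (i,j) = (j,j)"
  by (auto simp: bc_mult_def bc_inv_def)

lemma contE:
  assumes "continuous_map T T f" "\<And>k. f (k,k) \<in> bc_E"
  shows "continuous_map (subtopology T bc_E) (subtopology T bc_E) f"
  apply (rule continuous_map_into_subtopology)
   apply (rule continuous_map_from_subtopology[OF assms(1)])
  using assms(2) by (auto simp: bcE_iff)

lemma hyper:
  assumes t1: "t1_space Et" and top: "topspace Et = bc_E"
    and tr: "\<And>n. continuous_map Et Et (bc_mult (n,n))"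
    and noiso: "\<And>e. \<not> openin Et {e}"
    and A: "openin Et A" and B: "openin Et B" and a: "(m,m) \<in> A" and b: "(n,n) \<in> B"
    and mn: "m \<le> n"
  shows "A \<inter> B \<noteq> {}"
proof
  assume dis: "A \<inter> B = {}"
  define V where "V = {x \<in> topspace Et. bc_mult (n,n) x \<in> B}"
  have oV: "openin Et V" unfolding V_def by (rule openin_continuous_map_preimage[OF tr B])
  define F where "F = A \<inter> V"
  have oF: "openin Et F" unfolding F_def using A oV by auto
  have aF: "(m,m) \<in> F" unfolding F_def V_def using a b mn top
    by (auto simp: mult_EE bcE_iff max_def)
  have sub: "F \<subseteq> (\<lambda>k. (k,k)) ` {..n}"
  proof
    fix x assume x: "x \<in> F"
    then have "x \<in> bc_E" using oF openin_subset top by blast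
    then obtain k where k: "x = (k,k)" by (auto simp: bcE_iff)
    have "k \<le> n"
    proof (rule ccontr)
      assume "\<not> k \<le> n"
      then have "bc_mult (n,n) x = x" by (simp add: k mult_EE max_def)
      then have "x \<in> B" using x by (auto simp: F_def V_def)
      then show False using x dis by (auto simp: F_def)
    qed
    then show "x \<in> (\<lambda>k. (k,k)) ` {..n}" using k by auto
  qed
  have fin: "finite F" using sub finite_subset by blast
  have "closedin Et (F - {(m,m)})"
  proof -
    have "F - {(m,m)} \<subseteq> topspace Et" using oF openin_subset by blast
    moreover have "finite (F - {(m,m)})" using fin by simp
    ultimately show ?thesis using t1 unfolding t1_space_closedin_finite by blast
  qed
  then have "openin Et (F - (F - {(m,m)}))" using oF by (metis openin_diff)
  moreover have "F - (F - {(m,m)}) = {(m,m)}" using aF by auto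
  ultimately show False using noiso[of "(m,m)"] by simp
qed

theorem proposition5:
  fixes T :: "(nat \<times> nat) topology"
  assumes "t1_space T"
    and "bc_semitopological T"
    and "continuous_map T (subtopology T bc_E) (\<lambda>x. bc_mult x (bc_inv x))"
    and "continuous_map T (subtopology T bc_E) (\<lambda>x. bc_mult (bc_inv x) x)"
    and "\<exists>i. semiregular_at T bc_E (i, i)"
  shows "T = discrete_topology UNIV"
proof -
  define Et where "Et = subtopology T bc_E"
  have topT: "topspace T = UNIV" using assms(2) by (simp add: bc_semitopological_def)
  have top: "topspace Et = bc_E" by (simp add: Et_def topT)
  have t1: "t1_space Et" unfolding Et_def by (rule t1_space_subtopology[OF assms(1)])
  have lc: "continuous_map T T (bc_mult a)" for a
  proof -
    have "continuous_map T T (bc_mult (fst a, snd a))"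
      using assms(2) unfolding bc_semitopological_def by blast
    then show ?thesis by simp
  qed
  have rc: "continuous_map T T (\<lambda>x. bc_mult x a)" for a
  proof -
    have "continuous_map T T (\<lambda>x. bc_mult x (fst a, snd a))"
      using assms(2) unfolding bc_semitopological_def by blast
    then show ?thesis by simp
  qed
  have tr: "continuous_map Et Et (bc_mult (n,n))" for n
    unfolding Et_def by (rule contE[OF lc]) (auto simp: mult_EE bcE_iff)
  have sh: "continuous_map Et Et (\<lambda>x. bc_mult (bc_mult (a,0) x) (0,a))" for a
    unfolding Et_def
    by (rule contE[OF continuous_map_compose[OF lc rc, unfolded o_def]]) (auto simp: mult_shift bcE_iff)
  have dn: "continuous_map Et Et (\<lambda>x. bc_mult (0,n) (bc_mult x (n,0)))" for n
    unfolding Et_def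
    by (rule contE[OF continuous_map_compose[OF rc lc, unfolded o_def]]) (auto simp: mult_down bcE_iff)
  have iso: "\<exists>e. openin Et {e}"
  proof (rule ccontr)
    assume noiso0: "\<not> (\<exists>e. openin Et {e})"
    then have noiso: "\<And>e. \<not> openin Et {e}" by blast
    have meet: "A \<inter> B \<noteq> {}" if A: "openin Et A" and B: "openin Et B" and ne: "A \<noteq> {}" "B \<noteq> {}" for A B
    proof -
      obtain x where x: "x \<in> A" using ne by auto
      obtain y where y: "y \<in> B" using ne by auto
      have "x \<in> bc_E" using x A openin_subset top by blast
      then obtain m where m: "x = (m,m)" by (auto simp: bcE_iff)
      have "y \<in> bc_E" using y B openin_subset top by blast
      then obtain n where n: "y = (n,n)" by (auto simp: bcE_iff)
      show ?thesis
      proof (cases "m \<le> n")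
        case True
        then show ?thesis using hyper[OF t1 top tr noiso A B] x y m n by blast
      next
        case False
        then show ?thesis using hyper[OF t1 top tr noiso B A, of n m] x y m n by auto
      qed
    qed
    obtain i where sr: "semiregular_at T bc_E (i,i)" using assms(5) by blast
    define c where "c = (if i = 0 then (1::nat,1::nat) else (0,0))"
    have cE: "c \<in> bc_E" by (auto simp: c_def bcE_iff)
    have ci: "c \<noteq> (i,i)" by (auto simp: c_def)
    have "closedin Et {c}" using t1 cE top by (simp add: t1_space_closedin_singleton)
    then have oW: "openin Et (bc_E - {c})" using top by (metis openin_diff openin_topspace)
    have iE: "(i,i) \<in> bc_E" by (auto simp: bcE_iff)
    obtain U where U: "(i,i) \<in> U" "U \<subseteq> bc_E - {c}" "U = Et interior_of (Et closure_of U)"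
      using sr oW iE ci unfolding semiregular_at_def Et_def[symmetric] by blast
    have h: "openin Et (Et interior_of (Et closure_of U))" by (rule openin_interior_of)
    have oU: "openin Et U" using h by (simp only: U(3)[symmetric])
    have "Et closure_of U = bc_E"
    proof
      show "Et closure_of U \<subseteq> bc_E" using closure_of_subset_topspace[of Et U] unfolding top .
      show "bc_E \<subseteq> Et closure_of U"
      proof
        fix x assume x: "x \<in> bc_E"
        show "x \<in> Et closure_of U"
          unfolding in_closure_of
        proof (intro conjI allI impI)
          show "x \<in> topspace Et" using x top by simp
          fix S assume S: "x \<in> S \<and> openin Et S"
          then have "U \<inter> S \<noteq> {}" using meet[OF oU, of S] U(1) by blast
          then show "\<exists>y. y \<in> U \<and> y \<in> S" by blast
        qed
      qed
    qed
    then have "Et interior_of (Et closure_of U) = bc_E" using top interior_of_topspace[of Et] by simp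
    with U(3) have "U = bc_E" by (rule trans)
    then show False using U(2) cE by blast
  qed
  have zero: "openin Et {(0,0)}"
  proof -
    obtain e where e: "openin Et {e}" using iso by blast
    then have "e \<in> bc_E" using openin_subset top by blast
    then obtain a where a: "e = (a,a)" by (auto simp: bcE_iff)
    have "openin Et {x \<in> topspace Et. bc_mult (bc_mult (a,0) x) (0,a) \<in> {e}}"
      by (rule openin_continuous_map_preimage[OF sh e])
    moreover have "{x \<in> topspace Et. bc_mult (bc_mult (a,0) x) (0,a) \<in> {e}} = {(0,0)}"
      using top a by (auto simp: bcE_iff mult_shift)
    ultimately show ?thesis by simp
  qed
  have allE: "openin Et {(n,n)}" for n
  proof -
    have o1: "openin Et {x \<in> topspace Et. bc_mult (0,n) (bc_mult x (n,0)) \<in> {(0,0)}}"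
      by (rule openin_continuous_map_preimage[OF dn zero])
    have fin: "finite ((\<lambda>k. (k,k)) ` {..<n})" by simp
    have "closedin Et ((\<lambda>k. (k,k)) ` {..<n})"
    proof -
      have "(\<lambda>k. (k,k)) ` {..<n} \<subseteq> topspace Et" using top by (auto simp: bcE_iff)
      then show ?thesis using t1 fin unfolding t1_space_closedin_finite by blast
    qed
    then have o2: "openin Et (bc_E - (\<lambda>k. (k,k)) ` {..<n})"
      using top by (metis openin_diff openin_topspace)
    have "{x \<in> topspace Et. bc_mult (0,n) (bc_mult x (n,0)) \<in> {(0,0)}} \<inter> (bc_E - (\<lambda>k. (k,k)) ` {..<n}) = {(n,n)}"
      using top by (auto simp: bcE_iff mult_down)
    then show ?thesis using openin_Int[OF o1 o2] by simp
  qed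
  have allT: "openin T {(i,j)}" for i j
  proof -
    have o1: "openin T {x \<in> topspace T. bc_mult x (bc_inv x) \<in> {(i,i)}}"
      by (rule openin_continuous_map_preimage[OF assms(3) allE[unfolded Et_def]])
    have o2: "openin T {x \<in> topspace T. bc_mult (bc_inv x) x \<in> {(j,j)}}"
      by (rule openin_continuous_map_preimage[OF assms(4) allE[unfolded Et_def]])
    have "{x \<in> topspace T. bc_mult x (bc_inv x) \<in> {(i,i)}} \<inter> {x \<in> topspace T. bc_mult (bc_inv x) x \<in> {(j,j)}} = {(i,j)}"
    proof (safe)
      fix a b assume "bc_mult (a,b) (bc_inv (a,b)) = (i,i)" "bc_mult (bc_inv (a,b)) (a,b) = (j,j)"
      then show "a = i" "b = j" by (simp_all add: mult_inv1 mult_inv2)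
    qed (auto simp: topT mult_inv1 mult_inv2)
    then show ?thesis using openin_Int[OF o1 o2] by simp
  qed
  have "openin T S" for S
  proof -
    have "S = \<Union> ((\<lambda>x. {x}) ` S)" by auto
    moreover have "openin T (\<Union> ((\<lambda>x. {x}) ` S))"
      by (rule openin_Union) (auto intro: allT)
    ultimately show ?thesis by simp
  qed
  then show ?thesis by (simp add: topology_eq)
qed

end
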